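(* Let $\mathfrak g$ be of type $B_n$ and $J\subseteq I$. Then for $s\ge1$, $\mathbf A_{s,J}=\mathbf A^{1,1}_{s,J}\sqcup\mathbf A^{1,2}_{s,J}\sqcup\mathbf A^{2}_{s,J}$ where $$\mathbf A^{1,1}_{s,J}=\{\{\beta_{i_k,j_k}\}_{1\le k\le s}\in\mathbf A^1_s:\ i_k,j_k\notin J\ \forall k\},$$ $$\mathbf A^{1,2}_{s,J}=\{\{\beta_{i_k,j_k}\}_{1\le k\le s}\in\mathbf A^1_s:\ \{\beta_{i_k,j_k}\}_{1\le k\le s-1}\in\mathbf A^{1,1}_{s-1,J},\ i_s\in J,\ j_s=i_s+1\notin J\},$$ and, if $1\notin J$, $$\mathbf A^{2}_{s,J}=\{\{\alpha_{1,\ell}\}\cup\{\beta_{i_k,j_k}\}_{1\le k\le s-1}\in\mathbf A^2_s:\ \ell\notin J,\ \{\beta_{i_k,j_k}\}_{1\le k\le s-1}\in\mathbf A^{1,1}_{s-1,J}\sqcup\mathbf A^{1,2}_{s-1,J}\},$$ while $\mathbf A^2_{s,J}=\emptyset$ if $1\in J$.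
   Context: Simple roots $\alpha_1,\dots,\alpha_n$ of $B_n$ numbered as in Bourbaki, $I=\{1,\dots,n\}$; $\alpha_{i,j}=\alpha_i+\dots+\alpha_j$ ($i\le j$), $\beta_{k,\ell}=\alpha_{k,n}+\alpha_{\ell,n}$ ($k<\ell$), $\theta=\beta_{1,2}$. $\mathbf A^1_s=\{\{\beta_{i_k,j_k}\}_{1\le k\le s}: i_1<\dots<i_s<j_s<\dots<j_1\}$ and $\mathbf A^2_s=\{\{\alpha_{1,\ell}\}\cup\{\beta_{i_k,j_k}\}_{1\le k\le s-1}: \{\beta_{i_k,j_k}\}\in\mathbf A^1_{s-1},\ i_1>1,\ j_1\le\ell\}$; these together are all abelian antichains with $s$ elements. For $\eta=\sum_i d_i(\eta)\alpha_i$, $R^+(J)=\{\alpha\in R^+:d_i(\alpha)=0\ \forall i\notin J\}$. A $J$-antichain is a subset $A\subseteq R^+$ with $A\cap R^+(J)=\emptyset$, distinct elements pairwise incomparable (order: $\lambda\le\mu$ iff $\mu-\lambda$ is a nonnegative integer combination of simple roots), and $\alpha-\alpha_j\notin R$ for $\alpha\in A$, $j\in J$. $\Phi(A)=\{\alpha\in R^+:\alpha\ge\beta$ for some $\beta\in A\}$; $A$ is abelian if $\beta_1+\beta_2\notin R$ for all $\beta_1,\beta_2\in\Phi(A)$. $\mathbf A_{s,J}$ is the set of abelian $J$-antichains with $s$ elements; for $s=0$ the sets $\mathbf A^{1,1}_{0,J}$ consist of the empty antichain and $\mathbf A^{1,2}_{0,J}=\emptyset$. *)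

theory Defs
  imports Main "HOL-Library.Function_Algebras"
begin

text \<open>Root system of type B_n, n >= 2, simple roots alpha_1..alpha_n (Bourbaki numbering).
  A weight eta = sum d_i(eta) alpha_i is represented by its coefficient function
  nat => int (coefficients supported on {1..n}).\<close>

definition alpha :: "nat \<Rightarrow> nat \<Rightarrow> nat \<Rightarrow> int" where
  "alpha i j = (\<lambda>t. if i \<le> t \<and> t \<le> j then 1 else 0)"

definition beta :: "nat \<Rightarrow> nat \<Rightarrow> nat \<Rightarrow> nat \<Rightarrow> int" where
  "beta n k l = alpha k n + alpha l n"

definition posroots :: "nat \<Rightarrow> (nat \<Rightarrow> int) set" where
  "posroots n = {alpha i j | i j. 1 \<le> i \<and> i \<le> j \<and> j \<le> n}
              \<union> {beta n k l | k l. 1 \<le> k \<and> k < l \<and> l \<le> n}"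

definition roots :: "nat \<Rightarrow> (nat \<Rightarrow> int) set" where
  "roots n = posroots n \<union> uminus ` posroots n"

definition rle :: "(nat \<Rightarrow> int) \<Rightarrow> (nat \<Rightarrow> int) \<Rightarrow> bool" where
  "rle a b = (\<forall>t. a t \<le> b t)"

definition posroots_J :: "nat \<Rightarrow> nat set \<Rightarrow> (nat \<Rightarrow> int) set" where
  "posroots_J n J = {a \<in> posroots n. \<forall>i\<in>{1..n}. i \<notin> J \<longrightarrow> a i = 0}"

definition J_antichain :: "nat \<Rightarrow> nat set \<Rightarrow> (nat \<Rightarrow> int) set \<Rightarrow> bool" where
  "J_antichain n J A \<longleftrightarrow> A \<subseteq> posroots n \<and> A \<inter> posroots_J n J = {}
     \<and> (\<forall>a\<in>A. \<forall>b\<in>A. a \<noteq> b \<longrightarrow> \<not> rle a b)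
     \<and> (\<forall>a\<in>A. \<forall>j\<in>J. a - alpha j j \<notin> roots n)"

definition upper :: "nat \<Rightarrow> (nat \<Rightarrow> int) set \<Rightarrow> (nat \<Rightarrow> int) set" where
  "upper n A = {a \<in> posroots n. \<exists>b\<in>A. rle b a}"

definition abelian :: "nat \<Rightarrow> (nat \<Rightarrow> int) set \<Rightarrow> bool" where
  "abelian n A \<longleftrightarrow> (\<forall>b1\<in>upper n A. \<forall>b2\<in>upper n A. b1 + b2 \<notin> roots n)"

definition Aab :: "nat \<Rightarrow> nat \<Rightarrow> nat set \<Rightarrow> (nat \<Rightarrow> int) set set" where
  "Aab n s J = {A. J_antichain n J A \<and> abelian n A \<and> finite A \<and> card A = s}"

definition chain :: "nat \<Rightarrow> nat \<Rightarrow> (nat \<Rightarrow> nat) \<Rightarrow> (nat \<Rightarrow> nat) \<Rightarrow> bool" where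
  "chain n s i j \<longleftrightarrow> (\<forall>k\<in>{1..s}. 1 \<le> i k \<and> i k < j k \<and> j k \<le> n)
     \<and> (\<forall>k. 1 \<le> k \<and> k < s \<longrightarrow> i k < i (Suc k) \<and> j (Suc k) < j k)"

definition bset :: "nat \<Rightarrow> nat \<Rightarrow> (nat \<Rightarrow> nat) \<Rightarrow> (nat \<Rightarrow> nat) \<Rightarrow> (nat \<Rightarrow> int) set" where
  "bset n s i j = (\<lambda>k. beta n (i k) (j k)) ` {1..s}"

definition A1 :: "nat \<Rightarrow> nat \<Rightarrow> (nat \<Rightarrow> int) set set" where
  "A1 n s = {bset n s i j | i j. chain n s i j}"

definition A2 :: "nat \<Rightarrow> nat \<Rightarrow> (nat \<Rightarrow> int) set set" where
  "A2 n s = {insert (alpha 1 l) (bset n (s - 1) i j) | l i j.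
       1 \<le> s \<and> 1 \<le> l \<and> l \<le> n \<and> chain n (s - 1) i j
       \<and> (1 \<le> s - 1 \<longrightarrow> 1 < i 1 \<and> j 1 \<le> l)}"

definition A11 :: "nat \<Rightarrow> nat \<Rightarrow> nat set \<Rightarrow> (nat \<Rightarrow> int) set set" where
  "A11 n s J = {bset n s i j | i j. chain n s i j \<and> (\<forall>k\<in>{1..s}. i k \<notin> J \<and> j k \<notin> J)}"

text \<open>By convention A12 for s = 0 is empty.\<close>
definition A12 :: "nat \<Rightarrow> nat \<Rightarrow> nat set \<Rightarrow> (nat \<Rightarrow> int) set set" where
  "A12 n s J = {bset n s i j | i j. 1 \<le> s \<and> chain n s i j
       \<and> bset n (s - 1) i j \<in> A11 n (s - 1) J
       \<and> i s \<in> J \<and> j s = i s + 1 \<and> j s \<notin> J}"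

definition A2J :: "nat \<Rightarrow> nat \<Rightarrow> nat set \<Rightarrow> (nat \<Rightarrow> int) set set" where
  "A2J n s J = (if 1 \<in> J then {} else
     {insert (alpha 1 l) (bset n (s - 1) i j) | l i j.
       1 \<le> s \<and> 1 \<le> l \<and> l \<le> n \<and> chain n (s - 1) i j
       \<and> (1 \<le> s - 1 \<longrightarrow> 1 < i 1 \<and> j 1 \<le> l)
       \<and> l \<notin> J \<and> bset n (s - 1) i j \<in> A11 n (s - 1) J \<union> A12 n (s - 1) J})"

end

theory Submission
  imports Defs
begin


lemma alpha_v: "alpha i j t = (if i \<le> t \<and> t \<le> j then 1 else 0)"
  by (simp add: alpha_def)
lemma beta_v: "beta n k l t = (if k \<le> t \<and> t \<le> n then 1 else 0) + (if l \<le> t \<and> t \<le> n then 1 else 0)"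
  by (simp add: beta_def alpha_def)

lemma posroots_cases:
  assumes "x \<in> posroots n"
  obtains (A) i j where "1 \<le> i" "i \<le> j" "j \<le> n" "x = alpha i j"
        | (B) k l where "1 \<le> k" "k < l" "l \<le> n" "x = beta n k l"
  using assms unfolding posroots_def by blast

lemma alpha_in: "1 \<le> i \<Longrightarrow> i \<le> j \<Longrightarrow> j \<le> n \<Longrightarrow> alpha i j \<in> posroots n"
  unfolding posroots_def by blast
lemma beta_in: "1 \<le> k \<Longrightarrow> k < l \<Longrightarrow> l \<le> n \<Longrightarrow> beta n k l \<in> posroots n"
  unfolding posroots_def by blast
lemma pos_roots: "x \<in> posroots n \<Longrightarrow> x \<in> roots n"
  unfolding roots_def by blast

lemma posroots_val: "x \<in> posroots n \<Longrightarrow> 0 \<le> x t \<and> x t \<le> 2 \<and> x 1 \<le> 1"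
  by (erule posroots_cases) (auto simp: alpha_v beta_v)


lemma roots_le2: "x \<in> roots n \<Longrightarrow> x t \<le> 2"
  unfolding roots_def
proof (elim UnE imageE)
  fix y assume "y \<in> posroots n" "x = - y" thus "x t \<le> 2" using posroots_val[of y n t] by simp
qed (use posroots_val in blast)
lemma roots_1: "x \<in> roots n \<Longrightarrow> x 1 \<le> 1"
  unfolding roots_def
proof (elim UnE imageE)
  fix y assume "y \<in> posroots n" "x = - y" thus "x 1 \<le> 1" using posroots_val[of y n 1] by simp
qed (use posroots_val in blast)
lemma roots_pos: "x \<in> roots n \<Longrightarrow> 0 < x t \<Longrightarrow> x \<in> posroots n"
  unfolding roots_def
proof (elim UnE imageE)
  fix y assume "y \<in> posroots n" "x = - y" "0 < x t" thus "x \<in> posroots n" using posroots_val[of y n t] by simp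
qed

lemma beta_inj: "1 \<le> k \<Longrightarrow> k < l \<Longrightarrow> l \<le> n \<Longrightarrow> 1 \<le> k' \<Longrightarrow> k' < l' \<Longrightarrow> l' \<le> n \<Longrightarrow>
  beta n k l = beta n k' l' \<Longrightarrow> k = k' \<and> l = l'"
proof -
  assume a: "1 \<le> k" "k < l" "l \<le> n" "1 \<le> k'" "k' < l'" "l' \<le> n" and e: "beta n k l = beta n k' l'"
  have "beta n k l k = beta n k' l' k" "beta n k l k' = beta n k' l' k'"
       "beta n k l l = beta n k' l' l" "beta n k l l' = beta n k' l' l'" using e by auto
  thus ?thesis using a by (auto simp: beta_v split: if_splits)
qed

lemma alpha_ne_beta: "j \<le> n \<Longrightarrow> k < l \<Longrightarrow> l \<le> n \<Longrightarrow> alpha i j \<noteq> beta n k l"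
proof
  assume "j \<le> n" "k < l" "l \<le> n" "alpha i j = beta n k l"
  hence "alpha i j n = beta n k l n" by simp
  thus False using \<open>j \<le> n\<close> \<open>k < l\<close> \<open>l \<le> n\<close> by (auto simp: alpha_v beta_v split: if_splits)
qed

lemma rle_val: "rle a b \<Longrightarrow> a t \<le> b t" by (simp add: rle_def)




lemma N1:
  assumes k: "1 \<le> k" "k < l" "l \<le> n" and j: "1 \<le> j" "j \<le> n" "j \<noteq> l" "j = k \<longrightarrow> l = Suc k"
  shows "beta n k l - alpha j j \<notin> roots n"
proof
  let ?v = "beta n k l - alpha j j"
  assume r: "?v \<in> roots n"
  have "0 < ?v n" using k j by (auto simp: alpha_v beta_v)
  hence p: "?v \<in> posroots n" using roots_pos r by blast
  show False using p
  proof (cases rule: posroots_cases)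
    case (A a b)
    have "?v n = alpha a b n" "?v l = alpha a b l" using A by auto
    hence "beta n k l n - alpha j j n \<le> 1" "beta n k l l - alpha j j l \<le> 1"
      by (simp_all add: alpha_v)
    thus False using k j A by (simp add: alpha_v beta_v split: if_splits)
  next
    case (B a b)
    have e: "\<And>t. ?v t = beta n a b t" using B by auto
    have "?v j = beta n a b j" "?v k = beta n a b k" "?v l = beta n a b l" "?v (Suc k) = beta n a b (Suc k)"
      using e by blast+
    thus False using k j B(1-3)
      by (auto simp: alpha_v beta_v split: if_splits)
  qed
qed

lemma N2:
  assumes l: "1 \<le> l" "l \<le> n" and j: "1 < j" "j \<le> n" "j \<noteq> l"
  shows "alpha 1 l - alpha j j \<notin> roots n"
proof
  let ?v = "alpha 1 l - alpha j j"
  assume r: "?v \<in> roots n"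
  have "0 < ?v 1" using l j by (auto simp: alpha_v)
  hence p: "?v \<in> posroots n" using roots_pos r by blast
  have e: "\<And>t. 0 \<le> ?v t" using posroots_val[OF p] by blast
  show False using p
  proof (cases rule: posroots_cases)
    case (A a b)
    have "?v j = alpha a b j" "?v 1 = alpha a b 1" "?v l = alpha a b l" using A by auto
    thus False using l j A(1-3) e[of j] by (auto simp: alpha_v split: if_splits)
  next
    case (B a b)
    have "?v j = beta n a b j" "?v 1 = beta n a b 1" "?v l = beta n a b l" using B by auto
    thus False using l j B(1-3) e[of j] by (auto simp: alpha_v beta_v split: if_splits)
  qed
qed

lemma R1a: "1 \<le> k \<Longrightarrow> k < l \<Longrightarrow> l < n \<Longrightarrow> beta n k l - alpha l l \<in> roots n"
proof -
  assume a: "1 \<le> k" "k < l" "l < n"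
  have "beta n k l - alpha l l = beta n k (Suc l)"
    using a by (auto simp: fun_eq_iff alpha_v beta_v)
  thus ?thesis using a beta_in[of k "Suc l" n] pos_roots by auto
qed
lemma R1b: "1 \<le> k \<Longrightarrow> k < n \<Longrightarrow> beta n k n - alpha n n \<in> roots n"
proof -
  assume a: "1 \<le> k" "k < n"
  have "beta n k n - alpha n n = alpha k n"
    using a by (auto simp: fun_eq_iff alpha_v beta_v)
  thus ?thesis using a alpha_in[of k n n] pos_roots by auto
qed
lemma R2: "1 \<le> k \<Longrightarrow> Suc k < l \<Longrightarrow> l \<le> n \<Longrightarrow> beta n k l - alpha k k \<in> roots n"
proof -
  assume a: "1 \<le> k" "Suc k < l" "l \<le> n"
  have "beta n k l - alpha k k = beta n (Suc k) l"
    using a by (auto simp: fun_eq_iff alpha_v beta_v)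
  thus ?thesis using a beta_in[of "Suc k" l n] pos_roots by auto
qed
lemma R3: "1 < l \<Longrightarrow> l \<le> n \<Longrightarrow> alpha 1 l - alpha 1 1 \<in> roots n"
proof -
  assume a: "1 < l" "l \<le> n"
  have "alpha 1 l - alpha 1 1 = alpha 2 l"
    using a by (auto simp: fun_eq_iff alpha_v)
  thus ?thesis using a alpha_in[of 2 l n] pos_roots by auto
qed
lemma R4: "1 < l \<Longrightarrow> l \<le> n \<Longrightarrow> alpha 1 l - alpha l l \<in> roots n"
proof -
  assume a: "1 < l" "l \<le> n"
  have "alpha 1 l - alpha l l = alpha 1 (l - 1)"
    using a by (auto simp: fun_eq_iff alpha_v)
  thus ?thesis using a alpha_in[of 1 "l - 1" n] pos_roots by auto
qed
lemma S1: "1 < i \<Longrightarrow> i \<le> n \<Longrightarrow> alpha 1 n + alpha i n \<in> roots n"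
proof -
  assume a: "1 < i" "i \<le> n"
  have "alpha 1 n + alpha i n = beta n 1 i"
    using a by (auto simp: fun_eq_iff alpha_v beta_v)
  thus ?thesis using a beta_in[of 1 i n] pos_roots by auto
qed
lemma S2: "2 \<le> l \<Longrightarrow> l < n \<Longrightarrow> alpha 1 l + beta n 2 (Suc l) \<in> roots n"
proof -
  assume a: "2 \<le> l" "l < n"
  have "alpha 1 l + beta n 2 (Suc l) = beta n 1 2"
    using a by (auto simp: fun_eq_iff alpha_v beta_v)
  thus ?thesis using a beta_in[of 1 2 n] pos_roots by auto
qed
lemma S3: "2 < l \<Longrightarrow> l \<le> n \<Longrightarrow> alpha 1 1 + beta n 2 l \<in> roots n"
proof -
  assume a: "2 < l" "l \<le> n"
  have "alpha 1 1 + beta n 2 l = beta n 1 l"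
    using a by (auto simp: fun_eq_iff alpha_v beta_v)
  thus ?thesis using a beta_in[of 1 l n] pos_roots by auto
qed




lemma chain_mono:
  assumes c: "chain n s i j" and m: "1 \<le> m" "m < m'" "m' \<le> s"
  shows "i m < i m' \<and> j m' < j m"
  using m(2,3)
proof (induction m')
  case 0 thus ?case by simp
next
  case (Suc q)
  have st: "i q < i (Suc q) \<and> j (Suc q) < j q" using c Suc.prems m(1) unfolding chain_def by auto
  show ?case
  proof (cases "q = m")
    case True thus ?thesis using st by simp
  next
    case False
    hence "i m < i q \<and> j q < j m" using Suc by auto
    thus ?thesis using st by auto
  qed
qed

lemma chain_prefix: "chain n s i j \<Longrightarrow> chain n (s - 1) i j"
  unfolding chain_def by auto

lemma chain_elem: "chain n s i j \<Longrightarrow> m \<in> {1..s} \<Longrightarrow> 1 \<le> i m \<and> i m < j m \<and> j m \<le> n"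
  unfolding chain_def by auto

lemma bset_mem: "x \<in> bset n s i j \<longleftrightarrow> (\<exists>m\<in>{1..s}. x = beta n (i m) (j m))"
  unfolding bset_def by auto

lemma bset_split: "1 \<le> s \<Longrightarrow> bset n s i j = insert (beta n (i s) (j s)) (bset n (s - 1) i j)"
proof -
  assume "1 \<le> s"
  hence "{1..s} = insert s {1..s-1}" by auto
  thus ?thesis unfolding bset_def by simp
qed

lemma bset_card: assumes c: "chain n s i j" shows "card (bset n s i j) = s"
proof -
  have "inj_on (\<lambda>k. beta n (i k) (j k)) {1..s}"
  proof (rule inj_onI)
    fix a b assume ab: "a \<in> {1..s}" "b \<in> {1..s}" "beta n (i a) (j a) = beta n (i b) (j b)"
    hence "i a = i b" using beta_inj chain_elem[OF c ab(1)] chain_elem[OF c ab(2)] by blast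
    show "a = b"
    proof (rule ccontr)
      assume "a \<noteq> b"
      hence "a < b \<or> b < a" by auto
      thus False using chain_mono[OF c, of a b] chain_mono[OF c, of b a] ab \<open>i a = i b\<close> by auto
    qed
  qed
  thus ?thesis unfolding bset_def by (simp add: card_image)
qed

lemma build:
  "finite P \<Longrightarrow> card P = s \<Longrightarrow> \<forall>(k,l)\<in>P. 1 \<le> k \<and> k < l \<and> l \<le> n \<Longrightarrow>
   \<forall>(k,l)\<in>P. \<forall>(k',l')\<in>P. k < k' \<longrightarrow> l' < l \<Longrightarrow>
   \<forall>(k,l)\<in>P. \<forall>(k',l')\<in>P. k = k' \<longrightarrow> l = l' \<Longrightarrow>
   \<exists>i j. chain n s i j \<and> (\<lambda>m. (i m, j m)) ` {1..s} = P"
proof (induction s arbitrary: P)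
  case 0
  hence "P = {}" by simp
  thus ?case unfolding chain_def by auto
next
  case (Suc s)
  hence ne: "P \<noteq> {}" by auto
  define k0 where "k0 = Max (fst ` P)"
  have "k0 \<in> fst ` P" unfolding k0_def using Suc.prems(1) ne by simp
  then obtain l0 where p0: "(k0, l0) \<in> P" by force
  have kmax: "\<And>k l. (k,l) \<in> P \<Longrightarrow> k \<le> k0" unfolding k0_def using Suc.prems(1)
    by (metis Max_ge finite_imageI fst_conv image_eqI)
  define P' where "P' = P - {(k0,l0)}"
  have "card P' = s" unfolding P'_def using Suc.prems(1,2) p0 by simp
  have h3: "\<forall>(k,l)\<in>P'. 1 \<le> k \<and> k < l \<and> l \<le> n" using Suc.prems(3) unfolding P'_def by blast
  have h4: "\<forall>(k,l)\<in>P'. \<forall>(k',l')\<in>P'. k < k' \<longrightarrow> l' < l" using Suc.prems(4) unfolding P'_def by blast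
  have h5: "\<forall>(k,l)\<in>P'. \<forall>(k',l')\<in>P'. k = k' \<longrightarrow> l = l'" using Suc.prems(5) unfolding P'_def by blast
  have "finite P'" using Suc.prems(1) unfolding P'_def by simp
  then obtain i j where c: "chain n s i j" and im: "(\<lambda>m. (i m, j m)) ` {1..s} = P'"
    using Suc.IH[OF _ \<open>card P' = s\<close> h3 h4 h5] by blast
  define i' where "i' = i(Suc s := k0)"
  define j' where "j' = j(Suc s := l0)"
  have inP: "\<And>m. m \<in> {1..s} \<Longrightarrow> (i m, j m) \<in> P \<and> (i m, j m) \<noteq> (k0, l0)" using im unfolding P'_def by blast
  have ch: "chain n (Suc s) i' j'"
    unfolding chain_def
  proof (rule conjI; intro ballI allI impI)
    fix m assume m: "m \<in> {1..Suc s}"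
    show "1 \<le> i' m \<and> i' m < j' m \<and> j' m \<le> n"
    proof (cases "m = Suc s")
      case True thus ?thesis using p0 Suc.prems(3) unfolding i'_def j'_def by auto
    next
      case False thus ?thesis using chain_elem[OF c] m unfolding i'_def j'_def by auto
    qed
  next
    fix m assume m: "1 \<le> m \<and> m < Suc s"
    show "i' m < i' (Suc m) \<and> j' (Suc m) < j' m"
    proof (cases "m = s")
      case True
      have q: "(i s, j s) \<in> P" "(i s, j s) \<noteq> (k0, l0)" using inP[of s] m True by auto
      have "i s \<le> k0" using kmax q by blast
      moreover have "i s \<noteq> k0" using q p0 Suc.prems(5) by fastforce
      ultimately have "i s < k0" by simp
      moreover hence "l0 < j s" using q p0 Suc.prems(4) by fastforce
      ultimately show ?thesis using True unfolding i'_def j'_def by simp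
    next
      case False
      thus ?thesis using c m unfolding chain_def i'_def j'_def by auto
    qed
  qed
  have "{1..Suc s} = insert (Suc s) {1..s}" by auto
  hence "(\<lambda>m. (i' m, j' m)) ` {1..Suc s} = insert (k0, l0) ((\<lambda>m. (i m, j m)) ` {1..s})"
    unfolding i'_def j'_def by auto
  also have "\<dots> = P" using im p0 unfolding P'_def by auto
  finally show ?case using ch by blast
qed




lemma goodset_chain:
  assumes c: "chain n s i j"
    and g: "\<forall>x\<in>bset n s i j. \<exists>k l. 1 \<le> k \<and> k < l \<and> l \<le> n \<and> x = beta n k l \<and> Q k l"
  shows "\<forall>m\<in>{1..s}. Q (i m) (j m)"
proof
  fix m assume m: "m \<in> {1..s}"
  hence "beta n (i m) (j m) \<in> bset n s i j" unfolding bset_def by auto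
  then obtain k l where kl: "1 \<le> k" "k < l" "l \<le> n" "beta n (i m) (j m) = beta n k l" "Q k l"
    using g by blast
  hence "i m = k \<and> j m = l" using beta_inj chain_elem[OF c m] by blast
  thus "Q (i m) (j m)" using kl by simp
qed

lemma A11_elems: "X \<in> A11 n s J \<Longrightarrow> \<forall>x\<in>X. \<exists>k l. 1 \<le> k \<and> k < l \<and> l \<le> n \<and> x = beta n k l \<and> k \<notin> J \<and> l \<notin> J"
  unfolding A11_def bset_def chain_def by fastforce

lemma A12_wit: "chain n s i j \<Longrightarrow> 1 \<le> s \<Longrightarrow> bset n (s - 1) i j \<in> A11 n (s - 1) J \<Longrightarrow> i s \<in> J \<Longrightarrow>
   j s = i s + 1 \<Longrightarrow> j s \<notin> J \<Longrightarrow> \<forall>m\<in>{1..s}. j m \<notin> J \<and> (i m \<in> J \<longrightarrow> j m = Suc (i m))"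
proof -
  assume c: "chain n s i j" and s: "1 \<le> s" and p: "bset n (s - 1) i j \<in> A11 n (s - 1) J"
    and last: "i s \<in> J" "j s = i s + 1" "j s \<notin> J"
  have "\<forall>m\<in>{1..s-1}. i m \<notin> J \<and> j m \<notin> J"
    using goodset_chain[OF chain_prefix[OF c], of "\<lambda>k l. k \<notin> J \<and> l \<notin> J"] A11_elems[OF p] by blast
  hence h: "\<And>m. 1 \<le> m \<Longrightarrow> m < s \<Longrightarrow> i m \<notin> J \<and> j m \<notin> J" by auto
  show ?thesis
  proof
    fix m assume "m \<in> {1..s}"
    hence "m < s \<or> m = s" by auto
    thus "j m \<notin> J \<and> (i m \<in> J \<longrightarrow> j m = Suc (i m))"
      using h[of m] last \<open>m \<in> {1..s}\<close> by auto
  qed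
qed

lemma A12_elems: "X \<in> A12 n s J \<Longrightarrow> \<forall>x\<in>X. \<exists>k l. 1 \<le> k \<and> k < l \<and> l \<le> n \<and> x = beta n k l \<and> l \<notin> J \<and> (k \<in> J \<longrightarrow> l = Suc k)"
proof
  fix x assume "X \<in> A12 n s J" "x \<in> X"
  then obtain i j where w: "X = bset n s i j" "1 \<le> s" "chain n s i j" "bset n (s - 1) i j \<in> A11 n (s - 1) J"
    "i s \<in> J" "j s = i s + 1" "j s \<notin> J" unfolding A12_def by blast
  from A12_wit[OF w(3) w(2) w(4-7)] have g: "\<forall>m\<in>{1..s}. j m \<notin> J \<and> (i m \<in> J \<longrightarrow> j m = Suc (i m))" .
  from \<open>x \<in> X\<close> w(1) obtain m where "m \<in> {1..s}" "x = beta n (i m) (j m)" unfolding bset_def by auto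
  thus "\<exists>k l. 1 \<le> k \<and> k < l \<and> l \<le> n \<and> x = beta n k l \<and> l \<notin> J \<and> (k \<in> J \<longrightarrow> l = Suc k)"
    using g chain_elem[OF w(3)] by blast
qed

lemma beta_n: "k < l \<Longrightarrow> l \<le> n \<Longrightarrow> beta n k l n = 2"
  by (simp add: beta_v)

lemma upper_beta_n:
  assumes "x \<in> upper n A" "\<forall>b\<in>A. b n = 2" shows "2 \<le> x n"
  using assms unfolding upper_def rle_def by force

lemma A1_good:
  assumes c: "chain n s i j" and g: "\<forall>m\<in>{1..s}. j m \<notin> J \<and> (i m \<in> J \<longrightarrow> j m = Suc (i m))"
    and J: "J \<subseteq> {1..n}"
  shows "bset n s i j \<in> Aab n s J"
proof -
  let ?A = "bset n s i j"
  have sub: "?A \<subseteq> posroots n" unfolding bset_def using chain_elem[OF c] beta_in by blast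
  have disj: "?A \<inter> posroots_J n J = {}"
  proof (rule ccontr)
    assume "?A \<inter> posroots_J n J \<noteq> {}"
    then obtain m where m: "m \<in> {1..s}" "beta n (i m) (j m) \<in> posroots_J n J" unfolding bset_def by blast
    have "j m \<in> {1..n}" "j m \<notin> J" using chain_elem[OF c m(1)] g m(1) by auto
    hence "beta n (i m) (j m) (j m) = 0" using m(2) unfolding posroots_J_def by blast
    thus False using chain_elem[OF c m(1)] by (simp add: beta_v)
  qed
  have anti: "\<forall>a\<in>?A. \<forall>b\<in>?A. a \<noteq> b \<longrightarrow> \<not> rle a b"
  proof (intro ballI impI)
    fix a b assume ab: "a \<in> ?A" "b \<in> ?A" "a \<noteq> b"
    then obtain p q where pq: "p \<in> {1..s}" "q \<in> {1..s}" "a = beta n (i p) (j p)" "b = beta n (i q) (j q)"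
      unfolding bset_def by auto
    hence "p \<noteq> q" using ab by auto
    hence "p < q \<or> q < p" by auto
    thus "\<not> rle a b"
    proof
      assume "p < q"
      hence "i p < i q" using chain_mono[OF c, of p q] pq by auto
      hence "a (i p) > b (i p)" using pq chain_elem[OF c pq(1)] chain_elem[OF c pq(2)] by (auto simp: beta_v)
      thus ?thesis using rle_val by (metis not_le)
    next
      assume "q < p"
      hence "j p < j q" using chain_mono[OF c, of q p] pq by auto
      hence "a (j p) > b (j p)" using pq chain_elem[OF c pq(1)] chain_elem[OF c pq(2)] by (auto simp: beta_v)
      thus ?thesis using rle_val by (metis not_le)
    qed
  qed
  have subt: "\<forall>a\<in>?A. \<forall>t\<in>J. a - alpha t t \<notin> roots n"
  proof (intro ballI)
    fix a t assume a: "a \<in> ?A" and t: "t \<in> J"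
    then obtain m where m: "m \<in> {1..s}" "a = beta n (i m) (j m)" unfolding bset_def by auto
    show "a - alpha t t \<notin> roots n" unfolding m(2)
      by (rule N1) (use chain_elem[OF c m(1)] g m(1) t J in auto)
  qed
  have ab: "abelian n ?A"
    unfolding abelian_def
  proof (intro ballI)
    fix x y assume xy: "x \<in> upper n ?A" "y \<in> upper n ?A"
    have "\<forall>b\<in>?A. b n = 2" unfolding bset_def using chain_elem[OF c] beta_n by auto
    hence "2 \<le> x n" "2 \<le> y n" using upper_beta_n xy by blast+
    hence "\<not> (x + y) n \<le> 2" by simp
    thus "x + y \<notin> roots n" using roots_le2 by blast
  qed
  show ?thesis unfolding Aab_def J_antichain_def using sub disj anti subt ab bset_card[OF c]
    by (simp add: bset_def)
qed




lemma A2_good: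
  assumes c: "chain n (s - 1) i j" and s: "1 \<le> s" and l: "1 \<le> l" "l \<le> n"
    and h: "1 \<le> s - 1 \<longrightarrow> 1 < i 1 \<and> j 1 \<le> l" and lJ: "l \<notin> J" and oJ: "1 \<notin> J"
    and g: "\<forall>m\<in>{1..s-1}. j m \<notin> J \<and> (i m \<in> J \<longrightarrow> j m = Suc (i m))"
    and J: "J \<subseteq> {1..n}"
  shows "insert (alpha 1 l) (bset n (s - 1) i j) \<in> Aab n s J"
proof -
  let ?B = "bset n (s - 1) i j"
  let ?a = "alpha 1 l"
  let ?A = "insert ?a ?B"
  have bm: "\<And>m. m \<in> {1..s-1} \<Longrightarrow> 1 < i m \<and> j m \<le> l"
  proof -
    fix m assume m: "m \<in> {1..s-1}"
    show "1 < i m \<and> j m \<le> l"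
    proof (cases "m = 1")
      case True thus ?thesis using h m by auto
    next
      case False thus ?thesis using chain_mono[OF c, of 1 m] h m by auto
    qed
  qed
  have Bab: "?B \<in> Aab n (s - 1) J" using A1_good[OF c g J] .
  hence BJ: "J_antichain n J ?B" and Bfin: "finite ?B" and Bc: "card ?B = s - 1" unfolding Aab_def by auto
  have aB: "?a \<notin> ?B"
  proof
    assume "?a \<in> ?B"
    then obtain m where "m \<in> {1..s-1}" "?a = beta n (i m) (j m)" unfolding bset_def by blast
    thus False using alpha_ne_beta[of l n "i m" "j m" 1] chain_elem[OF c] l by blast
  qed
  have sub: "?A \<subseteq> posroots n" using BJ alpha_in[of 1 l n] l unfolding J_antichain_def by auto
  have disj: "?A \<inter> posroots_J n J = {}"
  proof -
    have "?a l = 1" using l by (simp add: alpha_v)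
    hence "?a \<notin> posroots_J n J" using l lJ unfolding posroots_J_def by force
    thus ?thesis using BJ unfolding J_antichain_def by auto
  qed
  have ab_ne: "\<And>b. b \<in> ?B \<Longrightarrow> \<not> rle ?a b \<and> \<not> rle b ?a"
  proof -
    fix b assume "b \<in> ?B"
    then obtain m where m: "m \<in> {1..s-1}" "b = beta n (i m) (j m)" unfolding bset_def by blast
    have e: "1 < i m" "j m \<le> l" "i m < j m" using bm[OF m(1)] chain_elem[OF c m(1)] by auto
    have "?a 1 > b 1" using m(2) e l by (simp add: alpha_v beta_v)
    moreover have "b n > ?a n" using m(2) e l by (simp add: alpha_v beta_v)
    ultimately show "\<not> rle ?a b \<and> \<not> rle b ?a" using rle_val by (metis not_le)
  qed
  have anti: "\<forall>x\<in>?A. \<forall>y\<in>?A. x \<noteq> y \<longrightarrow> \<not> rle x y"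
    using BJ ab_ne unfolding J_antichain_def by blast
  have subt: "\<forall>x\<in>?A. \<forall>t\<in>J. x - alpha t t \<notin> roots n"
  proof -
    have "\<forall>t\<in>J. ?a - alpha t t \<notin> roots n"
    proof
      fix t assume t: "t \<in> J"
      have "t \<in> {1..n}" using t J by blast
      moreover have "t \<noteq> 1" "t \<noteq> l" using t oJ lJ by auto
      ultimately have "1 < t" "t \<le> n" "t \<noteq> l" by auto
      thus "?a - alpha t t \<notin> roots n" using N2 l by blast
    qed
    thus ?thesis using BJ unfolding J_antichain_def by blast
  qed
  have ab: "abelian n ?A"
    unfolding abelian_def
  proof (intro ballI)
    fix x y assume xy: "x \<in> upper n ?A" "y \<in> upper n ?A"
    have cl: "\<And>z. z \<in> upper n ?A \<Longrightarrow> (1 \<le> z 1 \<and> (\<forall>t. 1 \<le> t \<and> t \<le> l \<longrightarrow> 1 \<le> z t)) \<or>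
       (\<exists>m\<in>{1..s-1}. 2 \<le> z (j m) \<and> 2 \<le> z n \<and> 1 \<le> j m \<and> j m \<le> l)"
    proof -
      fix z assume "z \<in> upper n ?A"
      then obtain b where b: "b \<in> ?A" "rle b z" unfolding upper_def by blast
      show "?thesis z"
      proof (cases "b = ?a")
        case True
        have "\<forall>t. 1 \<le> t \<and> t \<le> l \<longrightarrow> 1 \<le> z t"
        proof (intro allI impI)
          fix t assume "1 \<le> t \<and> t \<le> l"
          hence "b t = 1" using True by (simp add: alpha_v)
          thus "1 \<le> z t" using rle_val[OF b(2), of t] by simp
        qed
        thus ?thesis using l by auto
      next
        case False
        then obtain m where m: "m \<in> {1..s-1}" "b = beta n (i m) (j m)" using b(1) unfolding bset_def by blast
        have e: "1 < i m" "j m \<le> l" "i m < j m" "j m \<le> n" using bm[OF m(1)] chain_elem[OF c m(1)] by auto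
        have "2 \<le> z (j m)" "2 \<le> z n" using rle_val[OF b(2), of "j m"] rle_val[OF b(2), of n] m(2) e
          by (simp_all add: beta_v)
        thus ?thesis using m e by auto
      qed
    qed
    have "(x + y) 1 > 1 \<or> (x + y) n > 2 \<or> (\<exists>t. (x + y) t > 2)"
      using cl[OF xy(1)] cl[OF xy(2)]
    proof (elim disjE exE bexE conjE)
      assume "1 \<le> x 1" "1 \<le> y 1" thus ?thesis by simp
    next
      fix m assume "2 \<le> x n" "2 \<le> y n" thus ?thesis by simp
    next
      fix m assume "\<forall>t. 1 \<le> t \<and> t \<le> l \<longrightarrow> 1 \<le> x t" "2 \<le> y (j m)" "1 \<le> j m" "j m \<le> l"
      hence "(x + y) (j m) > 2" by force
      thus ?thesis by blast
    next
      fix m assume "\<forall>t. 1 \<le> t \<and> t \<le> l \<longrightarrow> 1 \<le> y t" "2 \<le> x (j m)" "1 \<le> j m" "j m \<le> l"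
      hence "(x + y) (j m) > 2" by force
      thus ?thesis by blast
    qed
    thus "x + y \<notin> roots n" using roots_le2 roots_1 by (metis not_le)
  qed
  have "card ?A = s" using Bfin aB Bc s by simp
  thus ?thesis unfolding Aab_def J_antichain_def using sub disj anti subt ab Bfin by simp
qed

lemma classify:
  assumes c: "chain n s i j" and g: "\<forall>m\<in>{1..s}. j m \<notin> J \<and> (i m \<in> J \<longrightarrow> j m = Suc (i m))"
  shows "bset n s i j \<in> A11 n s J \<union> A12 n s J"
proof (cases "\<forall>m\<in>{1..s}. i m \<notin> J")
  case True
  hence "bset n s i j \<in> A11 n s J" unfolding A11_def using c g by blast
  thus ?thesis by simp
next
  case False
  then obtain m where m: "m \<in> {1..s}" "i m \<in> J" by blast
  have ms: "m = s"
  proof (rule ccontr)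
    assume "m \<noteq> s"
    hence "m < s" using m by auto
    hence "i m < i (Suc m) \<and> j (Suc m) < j m" using c m unfolding chain_def by auto
    moreover have "i (Suc m) < j (Suc m)" using chain_elem[OF c, of "Suc m"] \<open>m < s\<close> by auto
    moreover have "j m = Suc (i m)" using g m by auto
    ultimately show False by auto
  qed
  have pre: "\<forall>q\<in>{1..s-1}. i q \<notin> J \<and> j q \<notin> J"
  proof
    fix q assume q: "q \<in> {1..s-1}"
    have "i q \<notin> J"
    proof
      assume "i q \<in> J"
      hence "j q = Suc (i q)" using g q by auto
      moreover have "q < s" using q m ms by auto
      hence "i q < i s \<and> j s < j q" using chain_mono[OF c, of q s] q by auto
      moreover have "i s < j s" using chain_elem[OF c m(1)] ms by auto
      ultimately show False by auto
    qed
    thus "i q \<notin> J \<and> j q \<notin> J" using g q by auto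
  qed
  have "bset n (s - 1) i j \<in> A11 n (s - 1) J" unfolding A11_def using chain_prefix[OF c] pre by blast
  moreover have "1 \<le> s" using m by auto
  ultimately have "bset n s i j \<in> A12 n s J" unfolding A12_def using c m ms g by fastforce
  thus ?thesis by simp
qed




lemma beta_rle: "k \<le> k' \<Longrightarrow> l \<le> l' \<Longrightarrow> rle (beta n k' l') (beta n k l)"
  unfolding rle_def by (auto simp: beta_v)
lemma alpha_rle: "a' \<le> a \<Longrightarrow> b \<le> b' \<Longrightarrow> rle (alpha a b) (alpha a' b')"
  unfolding rle_def by (auto simp: alpha_v)
lemma alpha_beta_rle: "l \<le> n \<Longrightarrow> rle (alpha 1 l) (beta n 1 m)"
  unfolding rle_def by (auto simp: alpha_v beta_v)

lemma beta_ne: "1 \<le> k \<Longrightarrow> k<l \<Longrightarrow> l \<le> n \<Longrightarrow> 1 \<le> k' \<Longrightarrow> k'<l' \<Longrightarrow> l' \<le> n \<Longrightarrow>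
   (k,l) \<noteq> (k',l') \<Longrightarrow> beta n k l \<noteq> beta n k' l'"
  using beta_inj by blast

lemma upperI: "x \<in> posroots n \<Longrightarrow> b \<in> A \<Longrightarrow> rle b x \<Longrightarrow> x \<in> upper n A"
  unfolding upper_def by blast

lemma subset_dir:
  assumes AA: "A \<in> Aab n s J" and J: "J \<subseteq> {1..n}" and s: "1 \<le> s"
  shows "A \<in> A11 n s J \<union> A12 n s J \<union> A2J n s J"
proof -
  have JA: "J_antichain n J A" and ab: "abelian n A" and fin: "finite A" and cA: "card A = s"
    using AA unfolding Aab_def by auto
  have sub: "A \<subseteq> posroots n" and disj: "A \<inter> posroots_J n J = {}"
    and anti: "\<And>a b. a \<in> A \<Longrightarrow> b \<in> A \<Longrightarrow> a \<noteq> b \<Longrightarrow> \<not> rle a b"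
    and subt: "\<And>a t. a \<in> A \<Longrightarrow> t \<in> J \<Longrightarrow> a - alpha t t \<notin> roots n"
    using JA unfolding J_antichain_def by auto
  have abl: "\<And>x y. x \<in> upper n A \<Longrightarrow> y \<in> upper n A \<Longrightarrow> x + y \<notin> roots n"
    using ab unfolding abelian_def by blast
  define Bs where "Bs = {x \<in> A. \<exists>k l. 1 \<le> k \<and> k < l \<and> l \<le> n \<and> x = beta n k l}"
  define P where "P = {(k,l). 1 \<le> k \<and> k < l \<and> l \<le> n \<and> beta n k l \<in> A}"
  have BsP: "Bs = (\<lambda>(k,l). beta n k l) ` P" unfolding Bs_def P_def by auto
  have Pr: "\<forall>(k,l)\<in>P. 1 \<le> k \<and> k < l \<and> l \<le> n" unfolding P_def by blast
  have PD: "\<And>k l. (k,l) \<in> P \<Longrightarrow> 1 \<le> k \<and> k < l \<and> l \<le> n \<and> beta n k l \<in> A"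
    unfolding P_def by simp
  have inj: "inj_on (\<lambda>(k,l). beta n k l) P"
  proof (rule inj_onI, clarify)
    fix k l k' l' assume p: "(k,l) \<in> P" "(k',l') \<in> P" and e: "beta n k l = beta n k' l'"
    have r: "1 \<le> k" "k < l" "l \<le> n" "1 \<le> k'" "k' < l'" "l' \<le> n" using PD[OF p(1)] PD[OF p(2)] by auto
    show "k = k' \<and> l = l'" using beta_inj[OF r e] .
  qed
  have finBs: "finite Bs" using fin unfolding Bs_def by simp
  have finP: "finite P" using finite_imageD[of "(\<lambda>(k,l). beta n k l)" P] finBs BsP inj by simp
  have cP: "card P = card Bs" using card_image[OF inj] BsP by simp
  have Pg: "\<And>k l. (k,l) \<in> P \<Longrightarrow> l \<notin> J \<and> (k \<in> J \<longrightarrow> l = Suc k)"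
  proof -
    fix k l assume p: "(k,l) \<in> P"
    hence r: "1 \<le> k" "k < l" "l \<le> n" and inA: "beta n k l \<in> A" unfolding P_def by auto
    have "l \<notin> J"
    proof
      assume lJ: "l \<in> J"
      have "beta n k l - alpha l l \<in> roots n"
      proof (cases "l < n")
        case True thus ?thesis using R1a[OF r(1,2) True] by blast
      next
        case False hence "l = n" using r by simp
        thus ?thesis using R1b[of k n] r by simp
      qed
      thus False using subt[OF inA lJ] by blast
    qed
    moreover have "k \<in> J \<longrightarrow> l = Suc k"
    proof
      assume kJ: "k \<in> J"
      show "l = Suc k"
      proof (rule ccontr)
        assume "l \<noteq> Suc k" hence "Suc k < l" using r by simp
        from R2[OF r(1) this r(3)] subt[OF inA kJ] show False by blast
      qed
    qed
    ultimately show "l \<notin> J \<and> (k \<in> J \<longrightarrow> l = Suc k)" by blast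
  qed
  have Pa1: "\<forall>(k,l)\<in>P. \<forall>(k',l')\<in>P. k < k' \<longrightarrow> l' < l"
  proof (clarify)
    fix k l k' l' assume p: "(k,l) \<in> P" "(k',l') \<in> P" "k < k'"
    show "l' < l"
    proof (rule ccontr)
      assume "\<not> l' < l"
      hence r: "rle (beta n k' l') (beta n k l)" using beta_rle[of k k' l l' n] p(3) by linarith
      have q1: "1 \<le> k \<and> k < l \<and> l \<le> n \<and> beta n k l \<in> A" by (rule PD[OF p(1)])
      have q2: "1 \<le> k' \<and> k' < l' \<and> l' \<le> n \<and> beta n k' l' \<in> A" by (rule PD[OF p(2)])
      have "(k',l') \<noteq> (k,l)" using p(3) by simp
      hence ne: "beta n k' l' \<noteq> beta n k l"
        using beta_ne[of k' l' n k l] q1 q2 by linarith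
      show False using anti[of "beta n k' l'" "beta n k l"] q1 q2 ne r by linarith
    qed
  qed
  have Pa2: "\<forall>(k,l)\<in>P. \<forall>(k',l')\<in>P. k = k' \<longrightarrow> l = l'"
  proof (clarify)
    fix k l l' assume p: "(k,l) \<in> P" "(k,l') \<in> P"
    have q1: "1 \<le> k \<and> k < l \<and> l \<le> n \<and> beta n k l \<in> A" by (rule PD[OF p(1)])
    have q2: "1 \<le> k \<and> k < l' \<and> l' \<le> n \<and> beta n k l' \<in> A" by (rule PD[OF p(2)])
    show "l = l'"
    proof (rule ccontr)
      assume ne: "l \<noteq> l'"
      hence "(k,l') \<noteq> (k,l)" by simp
      hence bne: "beta n k l' \<noteq> beta n k l"
        using beta_ne[of k l' n k l] q1 q2 by linarith
      show False
      proof (cases "l < l'")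
        case True
        hence "rle (beta n k l') (beta n k l)" using beta_rle[of k k l l' n] by linarith
        thus False using anti[of "beta n k l'" "beta n k l"] bne q1 q2 by linarith
      next
        case False
        hence "rle (beta n k l) (beta n k l')" using beta_rle[of k k l' l n] ne by linarith
        moreover have "beta n k l \<noteq> beta n k l'" using bne by simp
        ultimately show False using anti[of "beta n k l" "beta n k l'"] q1 q2 by blast
      qed
    qed
  qed
  obtain i j where c: "chain n (card P) i j" and im: "(\<lambda>m. (i m, j m)) ` {1..card P} = P"
    using build[OF finP refl Pr Pa1 Pa2] by (elim exE conjE)
  have "bset n (card P) i j = (\<lambda>(k,l). beta n k l) ` ((\<lambda>m. (i m, j m)) ` {1..card P})"
    unfolding bset_def image_image by simp
  also have "\<dots> = Bs" using im BsP by simp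
  finally have bs: "bset n (card P) i j = Bs" .
  have gd: "\<forall>m\<in>{1..card P}. j m \<notin> J \<and> (i m \<in> J \<longrightarrow> j m = Suc (i m))"
  proof
    fix m assume "m \<in> {1..card P}"
    hence "(i m, j m) \<in> P" using im by blast
    thus "j m \<notin> J \<and> (i m \<in> J \<longrightarrow> j m = Suc (i m))" by (rule Pg)
  qed
  have cls: "Bs \<in> A11 n (card P) J \<union> A12 n (card P) J" using classify[OF c gd] bs by simp
  show ?thesis
  proof (cases "A = Bs")
    case True
    hence "card P = s" using cP cA by simp
    thus ?thesis using cls True by simp
  next
    case False
    have alph: "\<And>x. x \<in> A \<Longrightarrow> x \<notin> Bs \<Longrightarrow> \<exists>l. 1 \<le> l \<and> l \<le> n \<and> x = alpha 1 l"
    proof -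
      fix x assume x: "x \<in> A" "x \<notin> Bs"
      hence "x \<in> posroots n" using sub by blast
      then obtain a b where r: "1 \<le> a" "a \<le> b" "b \<le> n" "x = alpha a b"
      proof (cases rule: posroots_cases)
        case (B k l)
        hence "x \<in> Bs" using x(1) unfolding Bs_def by blast
        thus ?thesis using x(2) by contradiction
      qed
      have "a = 1"
      proof (rule ccontr)
        assume "a \<noteq> 1" hence a1: "1 < a" using r by simp
        have an: "alpha 1 n \<in> posroots n" using r by (intro alpha_in) auto
        have ai: "alpha a n \<in> posroots n" using r by (intro alpha_in) auto
        have "rle (alpha a b) (alpha 1 n)" using r by (intro alpha_rle) auto
        hence u1: "alpha 1 n \<in> upper n A" using upperI[OF an x(1)] r(4) by simp
        have "rle (alpha a b) (alpha a n)" using r by (intro alpha_rle) auto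
        hence u2: "alpha a n \<in> upper n A" using upperI[OF ai x(1)] r(4) by simp
        have "alpha 1 n + alpha a n \<in> roots n" using S1[of a n] a1 r by linarith
        thus False using abl[OF u1 u2] by blast
      qed
      thus "\<exists>l. 1 \<le> l \<and> l \<le> n \<and> x = alpha 1 l" using r by blast
    qed
    have "Bs \<subseteq> A" unfolding Bs_def by blast
    with False obtain x where x: "x \<in> A" "x \<notin> Bs" by blast
    then obtain l where l: "1 \<le> l" "l \<le> n" "x = alpha 1 l" using alph by blast
    have xA: "alpha 1 l \<in> A" using x l by simp
    have oJ: "1 \<notin> J"
    proof
      assume oJ: "1 \<in> J"
      show False
      proof (cases "l = 1")
        case True
        have "alpha 1 1 \<in> posroots_J n J"
          unfolding posroots_J_def using alpha_in[of 1 1 n] l oJ True by (auto simp: alpha_v)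
        thus False using disj xA True by blast
      next
        case False thus False using R3[of l n] l subt[OF xA oJ] by simp
      qed
    qed
    have lJ: "l \<notin> J"
    proof
      assume lJ: "l \<in> J"
      hence "1 < l" using oJ l by (cases "l = 1") auto
      thus False using R4 l subt[OF xA lJ] by blast
    qed
    have Aeq: "A = insert (alpha 1 l) Bs"
    proof
      show "A \<subseteq> insert (alpha 1 l) Bs"
      proof
        fix y assume y: "y \<in> A"
        show "y \<in> insert (alpha 1 l) Bs"
        proof (cases "y \<in> Bs")
          case False
          then obtain l' where l': "1 \<le> l'" "l' \<le> n" "y = alpha 1 l'" using alph y by blast
          have "l' = l"
          proof (rule ccontr)
            assume ne: "l' \<noteq> l"
            have ane: "alpha 1 l' \<noteq> alpha 1 l"
            proof
              assume e: "alpha 1 l' = alpha 1 l"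
              hence "alpha 1 l' l = alpha 1 l l" "alpha 1 l' l' = alpha 1 l l'" by simp_all
              thus False using ne l l' by (simp add: alpha_v split: if_splits)
            qed
            show False
            proof (cases "l' \<le> l")
              case True
              hence "rle (alpha 1 l') (alpha 1 l)" using alpha_rle[of 1 1 l' l] by simp
              thus False using anti[of "alpha 1 l'" "alpha 1 l"] xA y l'(3) ane by blast
            next
              case False
              hence "rle (alpha 1 l) (alpha 1 l')" using alpha_rle[of 1 1 l l'] by simp
              moreover have "alpha 1 l \<noteq> alpha 1 l'" using ane by simp
              ultimately show False using anti[of "alpha 1 l" "alpha 1 l'"] xA y l'(3) by blast
            qed
          qed
          thus ?thesis using l' by simp
        qed simp
      qed
      show "insert (alpha 1 l) Bs \<subseteq> A" using xA unfolding Bs_def by blast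
    qed
    have Pk: "\<And>k m. (k,m) \<in> P \<Longrightarrow> 1 < k \<and> m \<le> l"
    proof -
      fix k m assume p: "(k,m) \<in> P"
      hence r: "1 \<le> k" "k < m" "m \<le> n" and inA: "beta n k m \<in> A" unfolding P_def by auto
      have k1: "1 < k"
      proof (rule ccontr)
        assume "\<not> 1 < k" hence "k = 1" using r by simp
        hence "rle (alpha 1 l) (beta n k m)" using alpha_beta_rle l by simp
        moreover have "alpha 1 l \<noteq> beta n k m" using alpha_ne_beta l r by blast
        ultimately show False using anti xA inA by blast
      qed
      have "m \<le> l"
      proof (rule ccontr)
        assume "\<not> m \<le> l" hence ml: "l < m" by simp
        have au: "alpha 1 l \<in> upper n A" using upperI[OF alpha_in[of 1 l n] xA] l unfolding rle_def by simp
        show False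
        proof (cases "l = 1")
          case True
          have "beta n 2 m \<in> upper n A"
            using upperI[OF beta_in[of 2 m n] inA] beta_rle[of 2 k m m n] k1 r by simp
          thus False using abl au S3[of m n] True k1 r by simp
        next
          case False
          have "beta n 2 (Suc l) \<in> upper n A"
            using upperI[OF beta_in[of 2 "Suc l" n] inA] beta_rle[of 2 k "Suc l" m n] k1 r l False ml by simp
          thus False using abl au S2[of l n] False l r ml by simp
        qed
      qed
      thus "1 < k \<and> m \<le> l" using k1 by simp
    qed
    have aBs: "alpha 1 l \<notin> Bs" using alpha_ne_beta l unfolding Bs_def by blast
    have cPs: "card P = s - 1" using cA Aeq aBs finBs cP by simp
    have h: "1 \<le> s - 1 \<longrightarrow> 1 < i 1 \<and> j 1 \<le> l"
    proof
      assume "1 \<le> s - 1"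
      hence "(i 1, j 1) \<in> P" using im cPs by force
      thus "1 < i 1 \<and> j 1 \<le> l" using Pk by blast
    qed
    have c': "chain n (s - 1) i j" using c cPs by simp
    have bs': "bset n (s - 1) i j = Bs" using bs cPs by simp
    have cls': "bset n (s - 1) i j \<in> A11 n (s - 1) J \<union> A12 n (s - 1) J" using cls cPs bs' by simp
    have "\<exists>l' i' j'. A = insert (alpha 1 l') (bset n (s - 1) i' j') \<and>
       1 \<le> s \<and> 1 \<le> l' \<and> l' \<le> n \<and> chain n (s - 1) i' j'
       \<and> (1 \<le> s - 1 \<longrightarrow> 1 < i' 1 \<and> j' 1 \<le> l')
       \<and> l' \<notin> J \<and> bset n (s - 1) i' j' \<in> A11 n (s - 1) J \<union> A12 n (s - 1) J"
      using Aeq bs' s l c' h lJ cls' by blast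
    hence "A \<in> A2J n s J" unfolding A2J_def using oJ by simp
    thus ?thesis by simp
  qed
qed




lemma sup_dir:
  assumes J: "J \<subseteq> {1..n}" and X: "X \<in> A11 n s J \<union> A12 n s J \<union> A2J n s J"
  shows "X \<in> Aab n s J"
proof -
  consider (a) "X \<in> A11 n s J" | (b) "X \<in> A12 n s J" | (c) "X \<in> A2J n s J" using X by blast
  thus ?thesis
  proof cases
    case a
    then obtain i j where w: "X = bset n s i j" "chain n s i j" "\<forall>k\<in>{1..s}. i k \<notin> J \<and> j k \<notin> J"
      unfolding A11_def by blast
    thus ?thesis using A1_good[OF w(2) _ J] by auto
  next
    case b
    then obtain i j where w: "X = bset n s i j" "1 \<le> s" "chain n s i j" "bset n (s - 1) i j \<in> A11 n (s - 1) J"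
      "i s \<in> J" "j s = i s + 1" "j s \<notin> J" unfolding A12_def by blast
    show ?thesis using A1_good[OF w(3) A12_wit[OF w(3) w(2) w(4-7)] J] w(1) by simp
  next
    case c
    have oJ: "1 \<notin> J"
    proof
      assume "1 \<in> J" hence "A2J n s J = {}" unfolding A2J_def by simp
      thus False using c by simp
    qed
    have "X \<in> {insert (alpha 1 l) (bset n (s - 1) i j) | l i j.
       1 \<le> s \<and> 1 \<le> l \<and> l \<le> n \<and> chain n (s - 1) i j
       \<and> (1 \<le> s - 1 \<longrightarrow> 1 < i 1 \<and> j 1 \<le> l)
       \<and> l \<notin> J \<and> bset n (s - 1) i j \<in> A11 n (s - 1) J \<union> A12 n (s - 1) J}"
      using c oJ unfolding A2J_def by simp
    then obtain l i j where w: "X = insert (alpha 1 l) (bset n (s - 1) i j)" "1 \<le> s" "1 \<le> l" "l \<le> n"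
      "chain n (s - 1) i j" "1 \<le> s - 1 \<longrightarrow> 1 < i 1 \<and> j 1 \<le> l" "l \<notin> J"
      "bset n (s - 1) i j \<in> A11 n (s - 1) J \<union> A12 n (s - 1) J" by blast
    have el: "\<forall>x\<in>bset n (s - 1) i j. \<exists>k l. 1 \<le> k \<and> k < l \<and> l \<le> n \<and> x = beta n k l \<and> l \<notin> J \<and> (k \<in> J \<longrightarrow> l = Suc k)"
    proof
      fix x assume x: "x \<in> bset n (s - 1) i j"
      show "\<exists>k l. 1 \<le> k \<and> k < l \<and> l \<le> n \<and> x = beta n k l \<and> l \<notin> J \<and> (k \<in> J \<longrightarrow> l = Suc k)"
      proof (cases "bset n (s - 1) i j \<in> A11 n (s - 1) J")
        case True
        then obtain k l where "1 \<le> k" "k < l" "l \<le> n" "x = beta n k l" "k \<notin> J" "l \<notin> J"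
          using A11_elems[OF True] x by blast
        thus ?thesis by blast
      next
        case False
        hence "bset n (s - 1) i j \<in> A12 n (s - 1) J" using w(8) by blast
        thus ?thesis using A12_elems x by blast
      qed
    qed
    have g: "\<forall>m\<in>{1..s-1}. j m \<notin> J \<and> (i m \<in> J \<longrightarrow> j m = Suc (i m))"
      using goodset_chain[OF w(5) el] .
    show ?thesis using A2_good[OF w(5) w(2) w(3) w(4) w(6) w(7) oJ g J] w(1) by simp
  qed
qed

lemma elems_beta: "X \<in> A11 n s J \<union> A12 n s J \<Longrightarrow> x \<in> X \<Longrightarrow> \<exists>k l. 1 \<le> k \<and> k < l \<and> l \<le> n \<and> x = beta n k l"
proof -
  assume X: "X \<in> A11 n s J \<union> A12 n s J" and x: "x \<in> X"
  show ?thesis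
  proof (cases "X \<in> A11 n s J")
    case True
    from A11_elems[OF True] x obtain k l where "1 \<le> k" "k < l" "l \<le> n" "x = beta n k l" by blast
    thus ?thesis by blast
  next
    case False
    hence "X \<in> A12 n s J" using X by blast
    from A12_elems[OF this] x obtain k l where "1 \<le> k" "k < l" "l \<le> n" "x = beta n k l" by blast
    thus ?thesis by blast
  qed
qed

lemma A2J_alpha: "X \<in> A2J n s J \<Longrightarrow> \<exists>l. 1 \<le> l \<and> l \<le> n \<and> alpha 1 l \<in> X"
proof -
  assume c: "X \<in> A2J n s J"
  have "1 \<notin> J"
  proof
    assume "1 \<in> J" hence "A2J n s J = {}" unfolding A2J_def by simp
    thus False using c by simp
  qed
  hence "X \<in> {insert (alpha 1 l) (bset n (s - 1) i j) | l i j.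
       1 \<le> s \<and> 1 \<le> l \<and> l \<le> n \<and> chain n (s - 1) i j
       \<and> (1 \<le> s - 1 \<longrightarrow> 1 < i 1 \<and> j 1 \<le> l)
       \<and> l \<notin> J \<and> bset n (s - 1) i j \<in> A11 n (s - 1) J \<union> A12 n (s - 1) J}"
      using c unfolding A2J_def by simp
  then obtain l i j where "X = insert (alpha 1 l) (bset n (s - 1) i j)" "1 \<le> l" "l \<le> n" by blast
  thus ?thesis by blast
qed

lemma disj12: "A11 n s J \<inter> A12 n s J = {}"
proof (rule ccontr)
  assume "A11 n s J \<inter> A12 n s J \<noteq> {}"
  then obtain X where X: "X \<in> A11 n s J" "X \<in> A12 n s J" by blast
  then obtain i j where w: "X = bset n s i j" "1 \<le> s" "chain n s i j" "i s \<in> J" unfolding A12_def by blast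
  have "beta n (i s) (j s) \<in> X" using w unfolding bset_def by auto
  then obtain k l where kl: "1 \<le> k" "k < l" "l \<le> n" "beta n (i s) (j s) = beta n k l" "k \<notin> J"
    using A11_elems[OF X(1)] by blast
  have "s \<in> {1..s}" using w by simp
  hence "i s = k" using beta_inj[OF _ _ _ kl(1-4)] chain_elem[OF w(3)] by blast
  thus False using w kl by simp
qed

lemma disj_2: "X \<in> A11 n s J \<union> A12 n s J \<Longrightarrow> X \<notin> A2J n s J"
proof
  assume a: "X \<in> A11 n s J \<union> A12 n s J" "X \<in> A2J n s J"
  then obtain l where l: "1 \<le> l" "l \<le> n" "alpha 1 l \<in> X" using A2J_alpha by blast
  then obtain k m where "1 \<le> k" "k < m" "m \<le> n" "alpha 1 l = beta n k m" using elems_beta[OF a(1)] by blast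
  thus False using alpha_ne_beta l by blast
qed

theorem mainTheorem9:
  fixes n s :: nat and J :: "nat set"
  assumes "2 \<le> n" and "J \<subseteq> {1..n}" and "1 \<le> s"
  shows "Aab n s J = A11 n s J \<union> A12 n s J \<union> A2J n s J
     \<and> A11 n s J \<inter> A12 n s J = {}
     \<and> A11 n s J \<inter> A2J n s J = {}
     \<and> A12 n s J \<inter> A2J n s J = {}"
proof (intro conjI)
  show "Aab n s J = A11 n s J \<union> A12 n s J \<union> A2J n s J"
    using subset_dir[OF _ assms(2,3)] sup_dir[OF assms(2)] by blast
  show "A11 n s J \<inter> A12 n s J = {}" by (rule disj12)
  show "A11 n s J \<inter> A2J n s J = {}" using disj_2 by blast
  show "A12 n s J \<inter> A2J n s J = {}" using disj_2 by blast
qed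


end
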